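(* Let $G\in\mathcal{G}(\widehat{C}_6,\widehat{C}_7)$ and $xy\in E(G)$. Then $xy$ is a relating edge if and only if there exist an independent set $S_x\subseteq N_2(x)\setminus N(y)$ which dominates $N(x)\cap N_2(y)$, and an independent set $S_y\subseteq N_2(y)\setminus N(x)$ which dominates $N(y)\cap N_2(x)$.
   Context: All graphs are finite, simple and undirected. $\mathcal{G}(\widehat{C}_6,\widehat{C}_7)$ is the family of graphs with no subgraph (not necessarily induced) isomorphic to $C_6$ or $C_7$. $N_i(v)$ is the set of vertices at distance exactly $i$ from $v$, $N(v)=N_1(v)$; a set $S$ dominates $T$ if every vertex of $T$ is in $S$ or adjacent to a vertex of $S$. An edge $xy$ is relating if there exists an independent set $S$, containing neither $x$ nor $y$, such that both $S\cup\{x\}$ and $S\cup\{y\}$ are maximal independent sets of $G$. *)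

theory Defs
  imports Main
begin

definition simple_graph :: "'a set \<Rightarrow> ('a \<Rightarrow> 'a \<Rightarrow> bool) \<Rightarrow> bool" where
  "simple_graph V E \<longleftrightarrow> finite V \<and> (\<forall>u v. E u v \<longrightarrow> u \<in> V \<and> v \<in> V)
     \<and> (\<forall>u v. E u v \<longrightarrow> E v u) \<and> (\<forall>u. \<not> E u u)"

definition has_cycle :: "'a set \<Rightarrow> ('a \<Rightarrow> 'a \<Rightarrow> bool) \<Rightarrow> nat \<Rightarrow> bool" where
  "has_cycle V E k \<longleftrightarrow> (\<exists>f :: nat \<Rightarrow> 'a. inj_on f {..<k} \<and> f ` {..<k} \<subseteq> V
     \<and> (\<forall>i<k. E (f i) (f (Suc i mod k))))"

fun walk_len :: "('a \<Rightarrow> 'a \<Rightarrow> bool) \<Rightarrow> nat \<Rightarrow> 'a \<Rightarrow> 'a \<Rightarrow> bool" where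
  "walk_len E 0 u v = (u = v)"
| "walk_len E (Suc n) u v = (\<exists>w. E u w \<and> walk_len E n w v)"

definition nbhd_dist :: "'a set \<Rightarrow> ('a \<Rightarrow> 'a \<Rightarrow> bool) \<Rightarrow> nat \<Rightarrow> 'a \<Rightarrow> 'a set" where
  "nbhd_dist V E i v = {u \<in> V. walk_len E i v u \<and> (\<forall>j<i. \<not> walk_len E j v u)}"

definition independent :: "'a set \<Rightarrow> ('a \<Rightarrow> 'a \<Rightarrow> bool) \<Rightarrow> 'a set \<Rightarrow> bool" where
  "independent V E S \<longleftrightarrow> S \<subseteq> V \<and> (\<forall>u\<in>S. \<forall>v\<in>S. \<not> E u v)"

definition maximal_independent :: "'a set \<Rightarrow> ('a \<Rightarrow> 'a \<Rightarrow> bool) \<Rightarrow> 'a set \<Rightarrow> bool" where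
  "maximal_independent V E S \<longleftrightarrow> independent V E S
     \<and> (\<forall>v\<in>V - S. \<not> independent V E (insert v S))"

definition dominates :: "('a \<Rightarrow> 'a \<Rightarrow> bool) \<Rightarrow> 'a set \<Rightarrow> 'a set \<Rightarrow> bool" where
  "dominates E S T \<longleftrightarrow> (\<forall>t\<in>T. t \<in> S \<or> (\<exists>s\<in>S. E s t))"

definition relating :: "'a set \<Rightarrow> ('a \<Rightarrow> 'a \<Rightarrow> bool) \<Rightarrow> 'a \<Rightarrow> 'a \<Rightarrow> bool" where
  "relating V E x y \<longleftrightarrow> E x y \<and> (\<exists>S. independent V E S \<and> x \<notin> S \<and> y \<notin> S
     \<and> maximal_independent V E (insert x S) \<and> maximal_independent V E (insert y S))"

end

theory Submission
  imports Defs
begin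

lemma walk1: "walk_len E (Suc 0) u v = E u v" by simp
lemma walk2: "walk_len E 2 u v = (\<exists>w. E u w \<and> E w v)" by (simp add: numeral_2_eq_2)

lemma N1: "simple_graph V E \<Longrightarrow> nbhd_dist V E 1 v = {u\<in>V. E v u}"
  unfolding nbhd_dist_def simple_graph_def by auto

lemma N2: "simple_graph V E \<Longrightarrow> nbhd_dist V E 2 v = {u\<in>V. u \<noteq> v \<and> \<not> E v u \<and> (\<exists>w. E v w \<and> E w u)}"
  unfolding nbhd_dist_def simple_graph_def
  by (auto simp: numeral_2_eq_2 less_Suc_eq)

lemma cyc6:
  assumes "distinct [x,a,s,t,b,y]" "set [x,a,s,t,b,y] \<subseteq> V"
    "E x a" "E a s" "E s t" "E t b" "E b y" "E y x"
  shows "has_cycle V E 6"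
proof -
  let ?l = "[x,a,s,t,b,y]"
  define f where "f = (\<lambda>i. ?l ! i)"
  have "inj_on f {..<6}"
    using assms(1) unfolding f_def inj_on_def by (simp add: nth_eq_iff_index_eq)
  moreover have "f ` {..<6} \<subseteq> V"
  proof
    fix z assume "z \<in> f ` {..<6}"
    then obtain i where "i < 6" "z = ?l ! i" unfolding f_def by auto
    then have "z \<in> set ?l" by (metis nth_mem length_Cons list.size(3) numeral_eq_Suc pred_numeral_simps(3) pred_numeral_simps(2) pred_numeral_simps(1) add_2_eq_Suc' One_nat_def semiring_norm(26) semiring_norm(27) semiring_norm(28))
    then show "z \<in> V" using assms(2) by blast
  qed
  moreover have "\<forall>i<6. E (f i) (f (Suc i mod 6))"
  proof (intro allI impI)
    fix i :: nat assume "i < 6"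
    then have "i = 0 \<or> i = 1 \<or> i = 2 \<or> i = 3 \<or> i = 4 \<or> i = 5" by auto
    then show "E (f i) (f (Suc i mod 6))" using assms unfolding f_def by auto
  qed
  ultimately show ?thesis unfolding has_cycle_def by blast
qed

lemma fwd:
  assumes G: "simple_graph V E" and xy: "E x y"
    and ix: "independent V E (insert x S)" and my: "maximal_independent V E (insert y S)"
    and yS: "y \<notin> S"
  shows "\<exists>Sx. independent V E Sx \<and> Sx \<subseteq> nbhd_dist V E 2 x - nbhd_dist V E 1 y
           \<and> dominates E Sx (nbhd_dist V E 1 x \<inter> nbhd_dist V E 2 y)"
proof -
  have sym: "\<And>u v. E u v \<Longrightarrow> E v u" and irr: "\<And>u. \<not> E u u"
    and inV: "\<And>u v. E u v \<Longrightarrow> u \<in> V \<and> v \<in> V"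
    using G unfolding simple_graph_def by blast+
  have iy: "independent V E (insert y S)" using my unfolding maximal_independent_def by blast
  define Sx where "Sx = S \<inter> nbhd_dist V E 2 x"
  have "independent V E Sx" using ix unfolding Sx_def independent_def by blast
  moreover have "Sx \<subseteq> nbhd_dist V E 2 x - nbhd_dist V E 1 y"
    using iy unfolding Sx_def N1[OF G] independent_def by blast
  moreover have "dominates E Sx (nbhd_dist V E 1 x \<inter> nbhd_dist V E 2 y)"
    unfolding dominates_def
  proof
    fix t assume "t \<in> nbhd_dist V E 1 x \<inter> nbhd_dist V E 2 y"
    then have t: "t \<in> V" "E x t" "t \<noteq> y" "\<not> E y t" unfolding N1[OF G] N2[OF G] by auto
    have tS: "t \<notin> S" using ix t(2) unfolding independent_def by blast
    have "\<not> independent V E (insert t (insert y S))"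
      using my t tS unfolding maximal_independent_def by blast
    moreover have "insert t (insert y S) \<subseteq> V" using iy t unfolding independent_def by blast
    ultimately obtain u w where uw: "u \<in> insert t (insert y S)" "w \<in> insert t (insert y S)" "E u w"
      unfolding independent_def by blast
    have "\<exists>s\<in>S. E s t"
    proof (cases "u = t")
      case True
      then have "w \<noteq> t" "w \<noteq> y" using uw(3) irr sym t(4) by auto
      then have "w \<in> S" using uw(2) by blast
      then show ?thesis using True uw(3) sym by blast
    next
      case False
      then have u: "u \<in> insert y S" using uw(1) by blast
      show ?thesis
      proof (cases "w = t")
        case True
        then have "u \<noteq> y" using uw(3) t(4) by auto
        then show ?thesis using u True uw(3) by blast
      next
        case False
        then have "w \<in> insert y S" using uw(2) by blast
        then show ?thesis using u uw(3) iy unfolding independent_def by blast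
      qed
    qed
    then obtain s where s: "s \<in> S" "E s t" by blast
    have "s \<noteq> x" using s(1) iy xy unfolding independent_def by blast
    moreover have "\<not> E x s" using s(1) ix unfolding independent_def by blast
    moreover have "s \<in> V" using inV s(2) by blast
    moreover have "E t s" using sym s(2) by blast
    ultimately have "s \<in> nbhd_dist V E 2 x"
      unfolding N2[OF G] using t(2) by blast
    then show "t \<in> Sx \<or> (\<exists>s\<in>Sx. E s t)" using s Sx_def by blast
  qed
  ultimately show ?thesis by blast
qed

lemma mi_half:
  assumes G: "simple_graph V E" and xy: "E x y"
    and iS: "independent V E S"
    and SW: "S \<subseteq> {v\<in>V. v\<noteq>x \<and> v\<noteq>y \<and> \<not>E x v \<and> \<not>E y v}"
    and domW: "\<forall>v\<in>V. v\<noteq>x \<and> v\<noteq>y \<and> \<not>E x v \<and> \<not>E y v \<and> v\<notin>S \<longrightarrow> (\<exists>u\<in>S. E u v)"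
    and domY: "\<forall>v\<in>V. E y v \<and> v\<noteq>x \<and> \<not>E x v \<longrightarrow> (\<exists>u\<in>S. E u v)"
  shows "maximal_independent V E (insert x S)"
proof -
  have sym: "\<And>u v. E u v \<Longrightarrow> E v u" and irr: "\<And>u. \<not> E u u"
    and inV: "\<And>u v. E u v \<Longrightarrow> u \<in> V \<and> v \<in> V"
    using G unfolding simple_graph_def by blast+
  have ix: "independent V E (insert x S)"
    using iS SW inV[OF xy] irr sym unfolding independent_def by blast
  have "\<not> independent V E (insert v (insert x S))" if v: "v \<in> V - insert x S" for v
  proof -
    have "\<exists>u\<in>insert x S. E u v"
    proof (cases "E x v")
      case True then show ?thesis by blast
    next
      case False
      show ?thesis
      proof (cases "v = y")
        case True then show ?thesis using xy by blast
      next
        case vy: False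
        show ?thesis
        proof (cases "E y v")
          case True then show ?thesis using domY v False by blast
        next
          case f2: False
          then show ?thesis using domW v False vy by blast
        qed
      qed
    qed
    then show ?thesis unfolding independent_def by blast
  qed
  then show ?thesis using ix unfolding maximal_independent_def by blast
qed

lemma bwd:
  assumes G: "simple_graph V E" and xy: "E x y" and nc: "\<not> has_cycle V E 6"
    and Sx: "independent V E Sx" "Sx \<subseteq> nbhd_dist V E 2 x - nbhd_dist V E 1 y"
           "dominates E Sx (nbhd_dist V E 1 x \<inter> nbhd_dist V E 2 y)"
    and Sy: "independent V E Sy" "Sy \<subseteq> nbhd_dist V E 2 y - nbhd_dist V E 1 x"
           "dominates E Sy (nbhd_dist V E 1 y \<inter> nbhd_dist V E 2 x)"
  shows "relating V E x y"
proof -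
  have sym: "\<And>u v. E u v \<Longrightarrow> E v u" and irr: "\<And>u. \<not> E u u"
    and inV: "\<And>u v. E u v \<Longrightarrow> u \<in> V \<and> v \<in> V" and fin: "finite V"
    using G unfolding simple_graph_def by blast+
  define Sx' where "Sx' = {s\<in>Sx. \<exists>a\<in>V. E x a \<and> a \<noteq> y \<and> \<not> E y a \<and> E s a}"
  define Sy' where "Sy' = {s\<in>Sy. \<exists>a\<in>V. E y a \<and> a \<noteq> x \<and> \<not> E x a \<and> E s a}"
  define W where "W = {v\<in>V. v\<noteq>x \<and> v\<noteq>y \<and> \<not>E x v \<and> \<not>E y v}"
  define S0 where "S0 = Sx' \<union> Sy'"
  have Sx2: "\<And>s. s \<in> Sx \<Longrightarrow> s \<in> V \<and> s \<noteq> x \<and> \<not> E x s \<and> \<not> E y s"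
    using Sx(2) unfolding N1[OF G] N2[OF G] by blast
  have Sy2: "\<And>s. s \<in> Sy \<Longrightarrow> s \<in> V \<and> s \<noteq> y \<and> \<not> E y s \<and> \<not> E x s"
    using Sy(2) unfolding N1[OF G] N2[OF G] by blast
  have S0W: "S0 \<subseteq> W" unfolding S0_def Sx'_def Sy'_def W_def using Sx2 Sy2 xy sym by blast
  have cross: "\<not> E s t" if s: "s \<in> Sx'" and t: "t \<in> Sy'" for s t
  proof
    assume st: "E s t"
    obtain a where a: "a \<in> V" "E x a" "a \<noteq> y" "\<not> E y a" "E s a" using s Sx'_def by blast
    obtain b where b: "b \<in> V" "E y b" "b \<noteq> x" "\<not> E x b" "E t b" using t Sy'_def by blast
    have s2: "s \<in> V" "s \<noteq> x" "\<not> E x s" "\<not> E y s" using Sx2 s Sx'_def by auto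
    have t2: "t \<in> V" "t \<noteq> y" "\<not> E y t" "\<not> E x t" using Sy2 t Sy'_def by auto
    have "distinct [x,a,s,t,b,y]"
      using a b s2 t2 xy st irr sym by auto
    moreover have "set [x,a,s,t,b,y] \<subseteq> V" using a b s2 t2 inV[OF xy] by auto
    ultimately have "has_cycle V E 6"
      using cyc6[of x a s t b y V E] a b st xy sym by blast
    then show False using nc by blast
  qed
  have iS0: "independent V E S0"
    using Sx(1) Sy(1) cross sym S0W unfolding S0_def Sx'_def Sy'_def independent_def W_def
    by blast
  define C where "C = {T. S0 \<subseteq> T \<and> T \<subseteq> W \<and> independent V E T}"
  have "finite C"
  proof -
    have "C \<subseteq> Pow W" unfolding C_def by blast
    moreover have "finite W" using fin unfolding W_def by auto
    ultimately show ?thesis by (meson finite_Pow_iff finite_subset)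
  qed
  moreover have "C \<noteq> {}" using S0W iS0 unfolding C_def by blast
  ultimately obtain S where SC: "S \<in> C" and Smax: "\<And>T. T \<in> C \<Longrightarrow> S \<subseteq> T \<Longrightarrow> S = T"
    using finite_has_maximal by metis
  have iS: "independent V E S" and SW: "S \<subseteq> W" and S0S: "S0 \<subseteq> S" using SC C_def by auto
  have domW: "\<exists>u\<in>S. E u v" if v: "v \<in> W" "v \<notin> S" for v
  proof -
    have "insert v S \<notin> C" using Smax[of "insert v S"] v by blast
    then have "\<not> independent V E (insert v S)" using S0S SW v unfolding C_def by blast
    moreover have "insert v S \<subseteq> V" using SW v W_def by blast
    ultimately obtain u w where "u \<in> insert v S" "w \<in> insert v S" "E u w"
      unfolding independent_def by blast
    then show ?thesis using iS irr sym unfolding independent_def by blast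
  qed
  have domY: "\<exists>u\<in>S. E u v" if v: "v \<in> V" "E y v" "v \<noteq> x" "\<not> E x v" for v
  proof -
    have "v \<in> nbhd_dist V E 1 y \<inter> nbhd_dist V E 2 x"
      unfolding N1[OF G] N2[OF G] using v xy by blast
    moreover have "v \<notin> Sy" using Sy2 v by blast
    ultimately obtain s where "s \<in> Sy" "E s v" using Sy(3) unfolding dominates_def by blast
    then have "s \<in> Sy'" unfolding Sy'_def using v by blast
    then show ?thesis using S0S S0_def \<open>E s v\<close> by blast
  qed
  have domX: "\<exists>u\<in>S. E u v" if v: "v \<in> V" "E x v" "v \<noteq> y" "\<not> E y v" for v
  proof -
    have "v \<in> nbhd_dist V E 1 x \<inter> nbhd_dist V E 2 y"
      unfolding N1[OF G] N2[OF G] using v xy sym by blast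
    moreover have "v \<notin> Sx" using Sx2 v by blast
    ultimately obtain s where "s \<in> Sx" "E s v" using Sx(3) unfolding dominates_def by blast
    then have "s \<in> Sx'" unfolding Sx'_def using v by blast
    then show ?thesis using S0S S0_def \<open>E s v\<close> by blast
  qed
  have m1: "maximal_independent V E (insert x S)"
    apply (rule mi_half[OF G xy iS])
    using SW domW domY unfolding W_def by blast+
  have m2: "maximal_independent V E (insert y S)"
    apply (rule mi_half[OF G sym[OF xy] iS])
    using SW domW domX unfolding W_def by blast+
  show ?thesis unfolding relating_def using xy iS m1 m2 SW W_def by blast
qed

theorem lemma3p1:
  fixes V :: "'a set" and E :: "'a \<Rightarrow> 'a \<Rightarrow> bool" and x y :: 'a
  assumes "simple_graph V E"
    and "\<not> has_cycle V E 6" and "\<not> has_cycle V E 7"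
    and "E x y"
  shows "relating V E x y \<longleftrightarrow>
    ((\<exists>Sx. independent V E Sx \<and> Sx \<subseteq> nbhd_dist V E 2 x - nbhd_dist V E 1 y
           \<and> dominates E Sx (nbhd_dist V E 1 x \<inter> nbhd_dist V E 2 y))
     \<and> (\<exists>Sy. independent V E Sy \<and> Sy \<subseteq> nbhd_dist V E 2 y - nbhd_dist V E 1 x
           \<and> dominates E Sy (nbhd_dist V E 1 y \<inter> nbhd_dist V E 2 x)))"
proof
  assume "relating V E x y"
  then obtain S where S: "independent V E S" "x \<notin> S" "y \<notin> S"
    "maximal_independent V E (insert x S)" "maximal_independent V E (insert y S)"
    unfolding relating_def by blast
  have yx: "E y x" using assms(1,4) unfolding simple_graph_def by blast
  show "(\<exists>Sx. independent V E Sx \<and> Sx \<subseteq> nbhd_dist V E 2 x - nbhd_dist V E 1 y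
           \<and> dominates E Sx (nbhd_dist V E 1 x \<inter> nbhd_dist V E 2 y))
     \<and> (\<exists>Sy. independent V E Sy \<and> Sy \<subseteq> nbhd_dist V E 2 y - nbhd_dist V E 1 x
           \<and> dominates E Sy (nbhd_dist V E 1 y \<inter> nbhd_dist V E 2 x))"
  proof
    have "independent V E (insert x S)" using S(4) unfolding maximal_independent_def by blast
    then show "\<exists>Sx. independent V E Sx \<and> Sx \<subseteq> nbhd_dist V E 2 x - nbhd_dist V E 1 y
           \<and> dominates E Sx (nbhd_dist V E 1 x \<inter> nbhd_dist V E 2 y)"
      by (rule fwd[OF assms(1) assms(4) _ S(5) S(3)])
    have "independent V E (insert y S)" using S(5) unfolding maximal_independent_def by blast
    then show "\<exists>Sy. independent V E Sy \<and> Sy \<subseteq> nbhd_dist V E 2 y - nbhd_dist V E 1 x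
           \<and> dominates E Sy (nbhd_dist V E 1 y \<inter> nbhd_dist V E 2 x)"
      by (rule fwd[OF assms(1) yx _ S(4) S(2)])
  qed
next
  assume "(\<exists>Sx. independent V E Sx \<and> Sx \<subseteq> nbhd_dist V E 2 x - nbhd_dist V E 1 y
           \<and> dominates E Sx (nbhd_dist V E 1 x \<inter> nbhd_dist V E 2 y))
     \<and> (\<exists>Sy. independent V E Sy \<and> Sy \<subseteq> nbhd_dist V E 2 y - nbhd_dist V E 1 x
           \<and> dominates E Sy (nbhd_dist V E 1 y \<inter> nbhd_dist V E 2 x))"
  then obtain Sx Sy where "independent V E Sx" "Sx \<subseteq> nbhd_dist V E 2 x - nbhd_dist V E 1 y"
           "dominates E Sx (nbhd_dist V E 1 x \<inter> nbhd_dist V E 2 y)"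
    "independent V E Sy" "Sy \<subseteq> nbhd_dist V E 2 y - nbhd_dist V E 1 x"
           "dominates E Sy (nbhd_dist V E 1 y \<inter> nbhd_dist V E 2 x)" by blast
  then show "relating V E x y" by (rule bwd[OF assms(1) assms(4) assms(2)])
qed

end
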